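(* Let $\mathcal C$ be a prenex class of sentences. Then: (i) 1-satisfiability of sentences in $\mathcal C$ is decidable in $G_V$ for every Gödel set $V$ if and only if classical satisfiability of sentences in $\mathcal C$ is decidable; (ii) for any two Gödel sets $V,V'$, a sentence in $\mathcal C$ is 1-satisfiable in $G_V$ if and only if it is 1-satisfiable in $G_{V'}$.
   Context: A Gödel set is a closed set $V\subseteq[0,1]$ with $0,1\in V$. A $V$-interpretation assigns to each $k$-ary predicate a function $U^k\to V$ on a nonempty domain $U$ (constants and function symbols as usual); $\bot\mapsto 0$, $\wedge,\vee$ are $\min,\max$, $\mathcal I(A\supset B)=1$ if $\mathcal I(A)\le\mathcal I(B)$ and $=\mathcal I(B)$ otherwise, $\forall,\exists$ are $\inf,\sup$ over $U$. A sentence is 1-satisfiable in $G_V$ if some $V$-interpretation gives it value $1$; classical satisfiability is two-valued satisfiability. A prenex sentence has the form $Q_1x_1\dots Q_nx_nB$ with $Q_i\in\{\forall,\exists\}$ and $B$ quantifier-free; a prenex class is the set of prenex sentences whose quantifier prefix belongs to a fixed set of prefixes (possibly with a fixed restriction on the signature, e.g. function-free). *)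

theory Defs
  imports Complex_Main
begin

text \<open>Terms: variables and function symbols (constants are 0-ary function symbols).
  A symbol is identified by its name together with the length of its argument list.\<close>
datatype trm = Var nat | Fn nat "trm list"

datatype fm =
    Bot
  | Atom nat "trm list"
  | And fm fm
  | Or fm fm
  | Imp fm fm
  | All nat fm
  | Ex nat fm

fun tvars :: "trm \<Rightarrow> nat set" where
  "tvars (Var n) = {n}"
| "tvars (Fn f ts) = (\<Union>t\<in>set ts. tvars t)"

fun fvars :: "fm \<Rightarrow> nat set" where
  "fvars Bot = {}"
| "fvars (Atom p ts) = (\<Union>t\<in>set ts. tvars t)"
| "fvars (And a b) = fvars a \<union> fvars b"
| "fvars (Or a b) = fvars a \<union> fvars b"
| "fvars (Imp a b) = fvars a \<union> fvars b"
| "fvars (All x a) = fvars a - {x}"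
| "fvars (Ex x a) = fvars a - {x}"

definition sentence :: "fm \<Rightarrow> bool" where
  "sentence \<phi> \<longleftrightarrow> fvars \<phi> = {}"

fun qfree :: "fm \<Rightarrow> bool" where
  "qfree (All x a) = False"
| "qfree (Ex x a) = False"
| "qfree (And a b) = (qfree a \<and> qfree b)"
| "qfree (Or a b) = (qfree a \<and> qfree b)"
| "qfree (Imp a b) = (qfree a \<and> qfree b)"
| "qfree _ = True"

fun prenex :: "fm \<Rightarrow> bool" where
  "prenex (All x a) = prenex a"
| "prenex (Ex x a) = prenex a"
| "prenex a = qfree a"

text \<open>Quantifier prefix: True stands for \<forall>, False for \<exists>.\<close>
fun qprefix :: "fm \<Rightarrow> bool list" where
  "qprefix (All x a) = True # qprefix a"
| "qprefix (Ex x a) = False # qprefix a"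
| "qprefix _ = []"

fun tfuns :: "trm \<Rightarrow> (nat \<times> nat) set" where
  "tfuns (Var n) = {}"
| "tfuns (Fn f ts) = insert (f, length ts) (\<Union>t\<in>set ts. tfuns t)"

fun ffuns :: "fm \<Rightarrow> (nat \<times> nat) set" where
  "ffuns Bot = {}"
| "ffuns (Atom p ts) = (\<Union>t\<in>set ts. tfuns t)"
| "ffuns (And a b) = ffuns a \<union> ffuns b"
| "ffuns (Or a b) = ffuns a \<union> ffuns b"
| "ffuns (Imp a b) = ffuns a \<union> ffuns b"
| "ffuns (All x a) = ffuns a"
| "ffuns (Ex x a) = ffuns a"

fun fpreds :: "fm \<Rightarrow> (nat \<times> nat) set" where
  "fpreds Bot = {}"
| "fpreds (Atom p ts) = {(p, length ts)}"
| "fpreds (And a b) = fpreds a \<union> fpreds b"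
| "fpreds (Or a b) = fpreds a \<union> fpreds b"
| "fpreds (Imp a b) = fpreds a \<union> fpreds b"
| "fpreds (All x a) = fpreds a"
| "fpreds (Ex x a) = fpreds a"

definition prenex_class :: "fm set \<Rightarrow> bool" where
  "prenex_class C \<longleftrightarrow>
     (\<exists>(Ps :: bool list set) (R :: (nat \<times> nat) set \<Rightarrow> (nat \<times> nat) set \<Rightarrow> bool).
        C = {\<phi>. sentence \<phi> \<and> prenex \<phi> \<and> qprefix \<phi> \<in> Ps \<and> R (ffuns \<phi>) (fpreds \<phi>)})"

definition goedel_set :: "real set \<Rightarrow> bool" where
  "goedel_set V \<longleftrightarrow> closed V \<and> V \<subseteq> {0..1} \<and> 0 \<in> V \<and> 1 \<in> V"

fun teval :: "(nat \<Rightarrow> 'u list \<Rightarrow> 'u) \<Rightarrow> (nat \<Rightarrow> 'u) \<Rightarrow> trm \<Rightarrow> 'u" where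
  "teval F e (Var n) = e n"
| "teval F e (Fn f ts) = F f (map (teval F e) ts)"

fun feval :: "'u set \<Rightarrow> (nat \<Rightarrow> 'u list \<Rightarrow> 'u) \<Rightarrow> (nat \<Rightarrow> 'u list \<Rightarrow> real)
              \<Rightarrow> (nat \<Rightarrow> 'u) \<Rightarrow> fm \<Rightarrow> real" where
  "feval U F P e Bot = 0"
| "feval U F P e (Atom p ts) = P p (map (teval F e) ts)"
| "feval U F P e (And a b) = min (feval U F P e a) (feval U F P e b)"
| "feval U F P e (Or a b) = max (feval U F P e a) (feval U F P e b)"
| "feval U F P e (Imp a b) =
     (if feval U F P e a \<le> feval U F P e b then 1 else feval U F P e b)"
| "feval U F P e (All x a) = Inf ((\<lambda>u. feval U F P (e(x := u)) a) ` U)"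
| "feval U F P e (Ex x a) = Sup ((\<lambda>u. feval U F P (e(x := u)) a) ` U)"

definition is_interp :: "real set \<Rightarrow> 'u set \<Rightarrow> (nat \<Rightarrow> 'u list \<Rightarrow> 'u)
                          \<Rightarrow> (nat \<Rightarrow> 'u list \<Rightarrow> real) \<Rightarrow> bool" where
  "is_interp V U F P \<longleftrightarrow> U \<noteq> {}
     \<and> (\<forall>f xs. set xs \<subseteq> U \<longrightarrow> F f xs \<in> U)
     \<and> (\<forall>p xs. set xs \<subseteq> U \<longrightarrow> P p xs \<in> V)"

definition one_sat :: "'u itself \<Rightarrow> real set \<Rightarrow> fm \<Rightarrow> bool" where
  "one_sat _ V \<phi> \<longleftrightarrow>
     (\<exists>(U :: 'u set) F P e. is_interp V U F P \<and> (\<forall>n. e n \<in> U) \<and> feval U F P e \<phi> = 1)"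

definition classical_sat :: "'u itself \<Rightarrow> fm \<Rightarrow> bool" where
  "classical_sat T \<phi> \<longleftrightarrow> one_sat T {0, 1} \<phi>"

end

theory Submission
  imports Defs
begin

definition Jp :: "(nat \<Rightarrow> 'u list \<Rightarrow> real) \<Rightarrow> nat \<Rightarrow> 'u list \<Rightarrow> real" where
  "Jp P = (\<lambda>p xs. if P p xs > 0 then 1 else 0)"

lemma teval_in:
  assumes "is_interp V U F P" "\<forall>n. e n \<in> U"
  shows "teval F e t \<in> U"
proof (induction t)
  case (Var n) then show ?case using assms by simp
next
  case (Fn f ts)
  then have "set (map (teval F e) ts) \<subseteq> U" by auto
  then show ?case using assms(1) unfolding is_interp_def by simp
qed

lemma feval_bounds:
  assumes "is_interp V U F P" "V \<subseteq> {0..1}"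
  shows "\<forall>n. e n \<in> U \<Longrightarrow> 0 \<le> feval U F P e \<phi> \<and> feval U F P e \<phi> \<le> 1"
proof (induction \<phi> arbitrary: e)
  case (Atom p ts)
  have "set (map (teval F e) ts) \<subseteq> U" using teval_in[OF assms(1) Atom] by auto
  then have "P p (map (teval F e) ts) \<in> V" using assms(1) unfolding is_interp_def by blast
  then show ?case using assms(2) by auto
next
  case (All x a)
  have U: "U \<noteq> {}" using assms(1) unfolding is_interp_def by blast
  have b: "\<forall>u\<in>U. 0 \<le> feval U F P (e(x := u)) a \<and> feval U F P (e(x := u)) a \<le> 1"
    using All by auto
  let ?S = "(\<lambda>u. feval U F P (e(x := u)) a) ` U"
  have "0 \<le> Inf ?S" using U b by (intro cInf_greatest) auto
  moreover have "Inf ?S \<le> 1"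
  proof -
    obtain u where u: "u \<in> U" using U by blast
    have "Inf ?S \<le> feval U F P (e(x := u)) a"
      using u b by (intro cInf_lower) (auto simp: bdd_below_def)
    then show ?thesis using b u by force
  qed
  ultimately show ?case by simp
next
  case (Ex x a)
  have U: "U \<noteq> {}" using assms(1) unfolding is_interp_def by blast
  have b: "\<forall>u\<in>U. 0 \<le> feval U F P (e(x := u)) a \<and> feval U F P (e(x := u)) a \<le> 1"
    using Ex by auto
  let ?S = "(\<lambda>u. feval U F P (e(x := u)) a) ` U"
  have "Sup ?S \<le> 1" using U b by (intro cSup_least) auto
  moreover have "0 \<le> Sup ?S"
  proof -
    obtain u where u: "u \<in> U" using U by blast
    have "feval U F P (e(x := u)) a \<le> Sup ?S"
      using u b by (intro cSup_upper) (auto simp: bdd_above_def)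
    then show ?thesis using b u by force
  qed
  ultimately show ?case by simp
next
  case (And a b) then show ?case by (simp add: min_le_iff_disj)
next
  case (Or a b) then show ?case by (simp add: le_max_iff_disj)
next
  case (Imp a b) then show ?case by auto
qed auto

lemma qf_hom:
  assumes "is_interp V U F P" "V \<subseteq> {0..1}"
  shows "qfree \<phi> \<Longrightarrow> \<forall>n. e n \<in> U \<Longrightarrow>
    feval U F (Jp P) e \<phi> = (if feval U F P e \<phi> > 0 then 1 else 0)"
proof (induction \<phi>)
  case (Atom p ts) then show ?case by (simp add: Jp_def)
next
  case (And a b) then show ?case by auto
next
  case (Or a b) then show ?case by auto
next
  case (Imp a b)
  have "0 \<le> feval U F P e a" "0 \<le> feval U F P e b"
    using feval_bounds[OF assms] Imp.prems by auto
  then show ?case using Imp by auto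
qed auto

lemma qf_pos:
  assumes "is_interp V U F P" "V \<subseteq> {0..1}"
  shows "qfree \<phi> \<Longrightarrow> \<forall>n. e n \<in> U \<Longrightarrow> feval U F P e \<phi> > 0 \<Longrightarrow>
    feval U F (Jp P) e \<phi> = 1"
  using qf_hom[OF assms] by simp

lemma prenex_pos:
  assumes "is_interp V U F P" "V \<subseteq> {0..1}"
  shows "prenex \<phi> \<Longrightarrow> \<forall>n. e n \<in> U \<Longrightarrow> feval U F P e \<phi> > 0 \<Longrightarrow>
    feval U F (Jp P) e \<phi> = 1"
proof (induction \<phi> arbitrary: e rule: prenex.induct)
  case (1 x a)
  have U: "U \<noteq> {}" using assms(1) unfolding is_interp_def by blast
  have b: "\<forall>u\<in>U. 0 \<le> feval U F P (e(x := u)) a"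
    using feval_bounds[OF assms] 1 by auto
  let ?S = "(\<lambda>u. feval U F P (e(x := u)) a) ` U"
  have pos: "\<forall>u\<in>U. feval U F P (e(x := u)) a > 0"
  proof
    fix u assume u: "u \<in> U"
    have "Inf ?S \<le> feval U F P (e(x := u)) a"
      using u b by (intro cInf_lower) (auto simp: bdd_below_def)
    then show "feval U F P (e(x := u)) a > 0" using 1(4) by simp
  qed
  have "\<forall>u\<in>U. feval U F (Jp P) (e(x := u)) a = 1"
    using 1 pos by auto
  then have "(\<lambda>u. feval U F (Jp P) (e(x := u)) a) ` U = {1}" using U by auto
  then show ?case by simp
next
  case (2 x a)
  have U: "U \<noteq> {}" using assms(1) unfolding is_interp_def by blast
  let ?S = "(\<lambda>u. feval U F P (e(x := u)) a) ` U"
  obtain u where u: "u \<in> U" "feval U F P (e(x := u)) a > 0"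
  proof (rule ccontr)
    assume "\<not> thesis"
    then have "\<forall>u\<in>U. feval U F P (e(x := u)) a \<le> 0" using that by force
    then have "Sup ?S \<le> 0" using U by (intro cSup_least) auto
    then show False using 2(4) by simp
  qed
  have j: "is_interp {0,1} U F (Jp P)"
    using assms(1) unfolding is_interp_def Jp_def by auto
  let ?T = "(\<lambda>u. feval U F (Jp P) (e(x := u)) a) ` U"
  have one: "feval U F (Jp P) (e(x := u)) a = 1" using 2 u by auto
  have "\<forall>v\<in>?T. v \<le> 1" using feval_bounds[OF j] 2(3) by auto
  then have "Sup ?T \<le> 1" using U by (intro cSup_least) auto
  moreover have "1 \<le> Sup ?T"
    using u one \<open>\<forall>v\<in>?T. v \<le> 1\<close> by (intro cSup_upper2[of 1]) (auto simp: bdd_above_def)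
  ultimately show ?case by simp
qed (rule qf_pos[OF assms]; simp)+

lemma V_to_classical:
  assumes "goedel_set V" "prenex \<phi>" "one_sat TYPE('u) V \<phi>"
  shows "classical_sat TYPE('u) \<phi>"
proof -
  obtain U :: "'u set" and F P e where h: "is_interp V U F P" "\<forall>n. e n \<in> U"
    "feval U F P e \<phi> = 1" using assms(3) unfolding one_sat_def by blast
  have V: "V \<subseteq> {0..1}" using assms(1) unfolding goedel_set_def by blast
  have "feval U F (Jp P) e \<phi> = 1" using prenex_pos[OF h(1) V assms(2) h(2)] h(3) by simp
  moreover have "is_interp {0,1} U F (Jp P)"
    using h(1) unfolding is_interp_def Jp_def by auto
  ultimately show ?thesis unfolding classical_sat_def one_sat_def using h(2) by blast
qed

lemma classical_to_V:
  assumes "goedel_set V" "classical_sat TYPE('u) \<phi>"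
  shows "one_sat TYPE('u) V \<phi>"
proof -
  have "{0,1} \<subseteq> V" using assms(1) unfolding goedel_set_def by blast
  then have "is_interp {0,1} U F P \<Longrightarrow> is_interp V U F P" for U :: "'u set" and F P
    unfolding is_interp_def by blast
  then show ?thesis using assms(2) unfolding classical_sat_def one_sat_def by blast
qed

theorem mainTheorem5:
  fixes C :: "fm set"
  assumes "prenex_class C"
    and "infinite (UNIV :: 'u set)"
  shows "(\<forall>V. goedel_set V \<longrightarrow>
            (\<forall>\<phi>\<in>C. one_sat TYPE('u) V \<phi> \<longleftrightarrow> classical_sat TYPE('u) \<phi>))
       \<and> (\<forall>V V'. goedel_set V \<longrightarrow> goedel_set V' \<longrightarrow>
            (\<forall>\<phi>\<in>C. one_sat TYPE('u) V \<phi> \<longleftrightarrow> one_sat TYPE('u) V' \<phi>))"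
proof -
  have pr: "\<forall>\<phi>\<in>C. prenex \<phi>" using assms(1) unfolding prenex_class_def by auto
  have A: "\<forall>V. goedel_set V \<longrightarrow>
            (\<forall>\<phi>\<in>C. one_sat TYPE('u) V \<phi> \<longleftrightarrow> classical_sat TYPE('u) \<phi>)"
    using pr V_to_classical classical_to_V by blast
  then show ?thesis by blast
qed

end
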